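(* Fix $x\in\mathbf{X}$. (i) Suppose $H_{TP}(x)\le\delta$, and define the OOD detectors by $\mathbf{P}'_k(x\in\mathbf{X}_k\mid D)=\mathbf{P}(x\in\mathbf{X}_k\mid D)$ for $k=1,\dots,T$. Then $H_{OOD,k}(x)\le\delta$ for all $k=1,\dots,T$. (ii) Suppose OOD detectors satisfy $H_{OOD,k}(x)\le\delta_k$ for $k=1,\dots,T$, and define task-id prediction probabilities by $\mathbf{P}(x\in\mathbf{X}_k\mid D)=\frac{\mathbf{P}'_k(x\in\mathbf{X}_k\mid D)}{\sum_{k'}\mathbf{P}'_{k'}(x\in\mathbf{X}_{k'}\mid D)}$. Then $H_{TP}(x)\le\big(\sum_k\mathbf{1}_{x\in\mathbf{X}_k}e^{\delta_k}\big)\big(\sum_k(1-e^{-\delta_k})\big)$, where $\mathbf{1}_{x\in\mathbf{X}_k}$ is the indicator of $x\in\mathbf{X}_k$.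
   Context: $\mathbf{X}$ is an input domain which is the disjoint union of task domains $\mathbf{X}_1,\dots,\mathbf{X}_T$. $D$ is a fixed conditioning event. A task-id prediction (TP) is a categorical distribution $\{\mathbf{P}(x\in\mathbf{X}_k\mid D)\}_{k=1}^T$ over the $T$ tasks (nonnegative, summing to $1$; in particular $1-\mathbf{P}(x\in\mathbf{X}_k\mid D)=\mathbf{P}(x\in\bigcup_{k'\neq k}\mathbf{X}_{k'}\mid D)$). For $x\in\mathbf{X}_{k_0}$, $H_{TP}(x)=-\log\mathbf{P}(x\in\mathbf{X}_{k_0}\mid D)$. An OOD detector for task $k$ is a Bernoulli distribution given by a value $\mathbf{P}'_k(x\in\mathbf{X}_k\mid D)\in[0,1]$, with $\mathbf{P}'_k(x\in\mathbf{X}\setminus\mathbf{X}_k\mid D)=1-\mathbf{P}'_k(x\in\mathbf{X}_k\mid D)$, and its cross-entropy is $H_{OOD,k}(x)=-\log\mathbf{P}'_k(x\in\mathbf{X}_k\mid D)$ if $x\in\mathbf{X}_k$ and $H_{OOD,k}(x)=-\log\mathbf{P}'_k(x\in\mathbf{X}\setminus\mathbf{X}_k\mid D)$ if $x\in\mathbf{X}\setminus\mathbf{X}_k$. *)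

theory Defs
  imports "HOL-Analysis.Analysis"
begin

definition neglog :: "real \<Rightarrow> ereal" where
  "neglog p = (if p \<le> 0 then \<infinity> else ereal (- ln p))"

text \<open>A task-id prediction for the fixed input x and condition D: the values
  P k = P(x in X_k | D), k = 1..T, form a categorical distribution.\<close>
definition is_TP :: "nat \<Rightarrow> (nat \<Rightarrow> real) \<Rightarrow> bool" where
  "is_TP T P \<longleftrightarrow> (\<forall>k\<in>{1..T}. 0 \<le> P k) \<and> (\<Sum>k=1..T. P k) = 1"

text \<open>OOD detectors: P' k = P'_k(x in X_k | D) in [0,1].\<close>
definition is_OOD :: "nat \<Rightarrow> (nat \<Rightarrow> real) \<Rightarrow> bool" where
  "is_OOD T P' \<longleftrightarrow> (\<forall>k\<in>{1..T}. 0 \<le> P' k \<and> P' k \<le> 1)"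

definition H_TP :: "(nat \<Rightarrow> 'a set) \<Rightarrow> nat \<Rightarrow> (nat \<Rightarrow> real) \<Rightarrow> 'a \<Rightarrow> ereal" where
  "H_TP Xs T P x = neglog (P (THE k. k \<in> {1..T} \<and> x \<in> Xs k))"

definition H_OOD :: "(nat \<Rightarrow> 'a set) \<Rightarrow> (nat \<Rightarrow> real) \<Rightarrow> nat \<Rightarrow> 'a \<Rightarrow> ereal" where
  "H_OOD Xs P' k x = (if x \<in> Xs k then neglog (P' k) else neglog (1 - P' k))"

end

theory Submission
  imports Defs
begin

lemma neglog_le_iff: "neglog p \<le> ereal d \<longleftrightarrow> (0 < p \<and> - ln p \<le> d)"
  by (auto simp: neglog_def)

theorem theorem2:
  fixes Xs :: "nat \<Rightarrow> 'a set" and T :: nat and x :: 'a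
  assumes disj: "disjoint_family_on Xs {1..T}"
    and x_in: "x \<in> (\<Union>k\<in>{1..T}. Xs k)"
  shows "(\<forall>(P :: nat \<Rightarrow> real) (\<delta> :: real).
            is_TP T P \<longrightarrow> H_TP Xs T P x \<le> ereal \<delta> \<longrightarrow>
            (\<forall>k\<in>{1..T}. H_OOD Xs P k x \<le> ereal \<delta>))
       \<and> (\<forall>(P' :: nat \<Rightarrow> real) (\<delta>s :: nat \<Rightarrow> real).
            is_OOD T P' \<longrightarrow> (\<forall>k\<in>{1..T}. H_OOD Xs P' k x \<le> ereal (\<delta>s k)) \<longrightarrow>
            H_TP Xs T (\<lambda>k. P' k / (\<Sum>k'=1..T. P' k')) x
              \<le> ereal ((\<Sum>k=1..T. indicator (Xs k) x * exp (\<delta>s k))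
                       * (\<Sum>k=1..T. (1 - exp (- \<delta>s k)))))"
proof -
  obtain k0 where k0: "k0 \<in> {1..T}" "x \<in> Xs k0" using x_in by blast
  have other: "x \<notin> Xs k" if "k \<in> {1..T}" "k \<noteq> k0" for k
    using disj that k0 unfolding disjoint_family_on_def by blast
  have the: "(THE k. k \<in> {1..T} \<and> x \<in> Xs k) = k0"
    using k0 other by (intro the_equality) auto
  have HTP: "H_TP Xs T P x = neglog (P k0)" for P
    unfolding H_TP_def the ..
  have fin: "finite {1..T}" by simp
  show ?thesis
  proof (intro conjI allI impI ballI)
    fix P :: "nat \<Rightarrow> real" and \<delta> :: real and k
    assume tp: "is_TP T P" and h: "H_TP Xs T P x \<le> ereal \<delta>" and k: "k \<in> {1..T}"
    from h have p0: "0 < P k0" "- ln (P k0) \<le> \<delta>" by (auto simp: HTP neglog_le_iff)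
    show "H_OOD Xs P k x \<le> ereal \<delta>"
    proof (cases "k = k0")
      case True
      then show ?thesis using k0 p0 by (simp add: H_OOD_def neglog_le_iff)
    next
      case False
      have "sum P {k, k0} \<le> sum P {1..T}"
        using tp k k0 by (intro sum_mono2) (auto simp: is_TP_def)
      then have "P k + P k0 \<le> 1" using False tp by (simp add: is_TP_def)
      moreover have "0 \<le> P k" using tp k by (simp add: is_TP_def)
      ultimately have "P k0 \<le> 1 - P k" by simp
      then have "ln (P k0) \<le> ln (1 - P k)" using p0 by simp
      then have "- ln (1 - P k) \<le> \<delta>" using p0 by linarith
      then show ?thesis using other[OF k False] p0 \<open>P k0 \<le> 1 - P k\<close>
        by (simp add: H_OOD_def neglog_le_iff)
    qed
  next
    fix P' :: "nat \<Rightarrow> real" and \<delta>s :: "nat \<Rightarrow> real"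
    assume ood: "is_OOD T P'" and h: "\<forall>k\<in>{1..T}. H_OOD Xs P' k x \<le> ereal (\<delta>s k)"
    have rng: "0 \<le> P' k" "P' k \<le> 1" if "k \<in> {1..T}" for k
      using ood that by (auto simp: is_OOD_def)
    have p0: "0 < P' k0" "- ln (P' k0) \<le> \<delta>s k0"
      using bspec[OF h k0(1)] k0(2) by (auto simp: H_OOD_def neglog_le_iff)
    have e0: "exp (- \<delta>s k0) \<le> P' k0"
    proof -
      have "exp (- \<delta>s k0) \<le> exp (ln (P' k0))" using p0(2) by simp
      then show ?thesis using p0(1) by simp
    qed
    have d0: "0 \<le> \<delta>s k0"
    proof -
      have "ln (P' k0) \<le> 0" using p0 rng[OF k0(1)] by simp
      then show ?thesis using p0 by linarith
    qed
    have ek: "P' k \<le> 1 - exp (- \<delta>s k)" if "k \<in> {1..T}" "k \<noteq> k0" for k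
    proof -
      have "0 < 1 - P' k" "- ln (1 - P' k) \<le> \<delta>s k"
        using bspec[OF h that(1)] other[OF that] by (auto simp: H_OOD_def neglog_le_iff)
      then have "exp (- \<delta>s k) \<le> exp (ln (1 - P' k))" by (subst exp_le_cancel_iff) linarith
      then have "exp (- \<delta>s k) \<le> 1 - P' k" using \<open>0 < 1 - P' k\<close> by simp
      then show ?thesis by simp
    qed
    define R where "R = (\<Sum>k\<in>{1..T} - {k0}. P' k)"
    have R0: "0 \<le> R" unfolding R_def using rng by (intro sum_nonneg) auto
    have S: "(\<Sum>k'=1..T. P' k') = P' k0 + R"
      unfolding R_def using k0 fin by (simp add: sum.remove)
    have "R \<le> (\<Sum>k\<in>{1..T} - {k0}. 1 - exp (- \<delta>s k))"
      unfolding R_def using ek by (intro sum_mono) auto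
    also have "\<dots> \<le> (\<Sum>k=1..T. 1 - exp (- \<delta>s k))"
      using k0 d0 by (intro sum_mono2) auto
    finally have Rle: "R \<le> (\<Sum>k=1..T. 1 - exp (- \<delta>s k))" .
    have ind: "(\<Sum>k=1..T. indicator (Xs k) x * exp (\<delta>s k)) = exp (\<delta>s k0)"
    proof -
      have "(\<Sum>k=1..T. indicator (Xs k) x * exp (\<delta>s k))
          = indicator (Xs k0) x * exp (\<delta>s k0) + (\<Sum>k\<in>{1..T} - {k0}. indicator (Xs k) x * exp (\<delta>s k))"
        by (rule sum.remove[OF fin k0(1)])
      also have "(\<Sum>k\<in>{1..T} - {k0}. indicator (Xs k) x * exp (\<delta>s k)) = (0::real)"
        using other by (intro sum.neutral) (auto simp: indicator_def)
      finally show ?thesis using k0 by simp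
    qed
    have pos: "0 < P' k0 / (P' k0 + R)" using p0 R0 by simp
    have "- ln (P' k0 / (P' k0 + R)) = ln ((P' k0 + R) / P' k0)"
      using p0 R0 by (simp add: ln_div)
    also have "\<dots> \<le> (P' k0 + R) / P' k0 - 1"
      using p0 R0 by (intro ln_le_minus_one) simp
    also have "\<dots> = R / P' k0" using p0 by (simp add: field_simps)
    also have "\<dots> \<le> R * exp (\<delta>s k0)"
    proof -
      have "1 / P' k0 \<le> exp (\<delta>s k0)"
      proof -
        have "inverse (P' k0) \<le> inverse (exp (- \<delta>s k0))"
          using e0 by (intro le_imp_inverse_le) auto
        then show ?thesis by (simp add: exp_minus inverse_eq_divide)
      qed
      then have "R * (1 / P' k0) \<le> R * exp (\<delta>s k0)" using R0 by (rule mult_left_mono)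
      then show ?thesis by simp
    qed
    also have "\<dots> \<le> exp (\<delta>s k0) * (\<Sum>k=1..T. 1 - exp (- \<delta>s k))"
      using Rle by (simp add: mult.commute)
    finally have "- ln (P' k0 / (P' k0 + R)) \<le> exp (\<delta>s k0) * (\<Sum>k=1..T. 1 - exp (- \<delta>s k))" .
    then show "H_TP Xs T (\<lambda>k. P' k / (\<Sum>k'=1..T. P' k')) x
              \<le> ereal ((\<Sum>k=1..T. indicator (Xs k) x * exp (\<delta>s k))
                       * (\<Sum>k=1..T. (1 - exp (- \<delta>s k))))"
      unfolding HTP S ind neglog_le_iff using pos by simp
  qed
qed

end
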